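(* Let $n>2$ and $q>0$ be integers such that $n$ is even or $q$ is odd, and let $p>\max\{n,(q-1)n+1\}$ be a prime. Then $$ \sum_{k=0}^{p-q}\frac{(q)_k^n}{(1)_k^n}\left(H_k^{(1)}-H_{q+k-1}^{(1)}\right)\equiv0\pmod{p} $$ and $$ \sum_{k=0}^{p-q}\frac{(q)_k^n}{(1)_k^n}\left((H_k^{(1)})^2-(H_{q+k-1}^{(1)})^2\right)\equiv0\pmod{p}. $$
   Context: $(x)_k$ denotes the Pochhammer symbol: $(x)_0=1$ and $(x)_k=x(x+1)\cdots(x+k-1)$ for $k>0$. $H_k^{(1)}=\sum_{j=1}^k 1/j$ is the $k$th harmonic number (with $H_0^{(1)}=0$). A congruence between rational numbers modulo $p^m$ means their difference lies in $p^m\mathbb{Z}_{(p)}$, where $\mathbb{Z}_{(p)}$ is the ring of rationals whose denominators are coprime to $p$. *)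

theory Defs
  imports Complex_Main "HOL-Computational_Algebra.Primes"
begin

definition harmonic :: "nat \<Rightarrow> rat" where
  "harmonic k = (\<Sum>j=1..k. 1 / of_nat j)"

text \<open>x lies in p Z_(p): x = a/b with p not dividing b and p dividing a.\<close>
definition rat_cong_zero :: "nat \<Rightarrow> rat \<Rightarrow> bool" where
  "rat_cong_zero p x \<longleftrightarrow>
     (\<exists>a b. b \<noteq> 0 \<and> x = of_int a / of_int b \<and> \<not> int p dvd b \<and> int p dvd a)"

end

theory Submission
  imports Defs
begin


definition pint :: "nat \<Rightarrow> rat \<Rightarrow> bool" where
  "pint p x \<longleftrightarrow> (\<exists>a b. b \<noteq> 0 \<and> x = of_int a / of_int b \<and> \<not> int p dvd b)"

definition rcong :: "nat \<Rightarrow> rat \<Rightarrow> rat \<Rightarrow> bool" where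
  "rcong p x y \<longleftrightarrow> rat_cong_zero p (x - y)"

context fixes p :: nat assumes pp: "prime p" begin

lemma pdvd_mult: "\<not> int p dvd b \<Longrightarrow> \<not> int p dvd d \<Longrightarrow> \<not> int p dvd (b * d)"
proof -
  have "prime (int p)" using pp by simp
  then show "\<not> int p dvd b \<Longrightarrow> \<not> int p dvd d \<Longrightarrow> \<not> int p dvd (b * d)"
    using prime_dvd_mult_iff by blast
qed

lemma I_add: assumes "rat_cong_zero p x" "rat_cong_zero p y" shows "rat_cong_zero p (x + y)"
proof -
  obtain a b where ab: "b \<noteq> 0" "x = of_int a / of_int b" "\<not> int p dvd b" "int p dvd a"
    using assms(1) unfolding rat_cong_zero_def by blast
  obtain c d where cd: "d \<noteq> 0" "y = of_int c / of_int d" "\<not> int p dvd d" "int p dvd c"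
    using assms(2) unfolding rat_cong_zero_def by blast
  have "x + y = of_int (a*d + c*b) / of_int (b*d)" using ab cd by (simp add: field_simps)
  moreover have "\<not> int p dvd (b*d)" using pdvd_mult ab cd by blast
  moreover have "int p dvd (a*d + c*b)" using ab cd by simp
  ultimately show ?thesis unfolding rat_cong_zero_def using ab cd
    by (intro exI[of _ "a*d + c*b"] exI[of _ "b*d"]) simp
qed

lemma I_neg: assumes "rat_cong_zero p x" shows "rat_cong_zero p (- x)"
proof -
  obtain a b where ab: "b \<noteq> 0" "x = of_int a / of_int b" "\<not> int p dvd b" "int p dvd a"
    using assms(1) unfolding rat_cong_zero_def by blast
  have "- x = of_int (-a) / of_int b" using ab by simp
  then show ?thesis unfolding rat_cong_zero_def using ab by (intro exI[of _ "-a"] exI[of _ b]) simp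
qed

lemma I_diff: "rat_cong_zero p x \<Longrightarrow> rat_cong_zero p y \<Longrightarrow> rat_cong_zero p (x - y)"
  using I_add[of x "-y"] I_neg[of y] by simp

lemma I_zero: "rat_cong_zero p 0"
proof -
  have "\<not> int p dvd 1" using pp by (simp add: prime_nat_iff)
  then show ?thesis unfolding rat_cong_zero_def by (intro exI[of _ 0] exI[of _ 1]) simp
qed

lemma I_mult: assumes "pint p x" "rat_cong_zero p y" shows "rat_cong_zero p (x * y)"
proof -
  obtain a b where ab: "b \<noteq> 0" "x = of_int a / of_int b" "\<not> int p dvd b"
    using assms(1) unfolding pint_def by blast
  obtain c d where cd: "d \<noteq> 0" "y = of_int c / of_int d" "\<not> int p dvd d" "int p dvd c"
    using assms(2) unfolding rat_cong_zero_def by blast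
  have "x * y = of_int (a*c) / of_int (b*d)" using ab cd by (simp add: field_simps)
  moreover have "\<not> int p dvd (b*d)" using pdvd_mult ab cd by blast
  moreover have "int p dvd (a*c)" using ab cd by simp
  ultimately show ?thesis unfolding rat_cong_zero_def using ab cd
    by (intro exI[of _ "a*c"] exI[of _ "b*d"]) simp
qed

lemma I_half: assumes "odd p" "rat_cong_zero p (2 * x)" shows "rat_cong_zero p x"
proof -
  obtain a b where ab: "b \<noteq> 0" "2 * x = of_int a / of_int b" "\<not> int p dvd b" "int p dvd a"
    using assms(2) unfolding rat_cong_zero_def by blast
  have "x = of_int a / of_int (2*b)" using ab by (simp add: field_simps)
  moreover have "\<not> int p dvd 2"
  proof
    assume "int p dvd 2"
    hence "p dvd 2" by (metis int_dvd_int_iff of_nat_numeral)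
    hence "p \<le> 2" by (rule dvd_imp_le) simp
    moreover have "p \<ge> 2" using pp prime_ge_2_nat by blast
    ultimately have "p = 2" by simp
    then show False using assms(1) by simp
  qed
  hence "\<not> int p dvd (2*b)" using pdvd_mult ab by blast
  ultimately show ?thesis unfolding rat_cong_zero_def using ab
    by (intro exI[of _ "a"] exI[of _ "2*b"]) simp
qed

lemma P_add: assumes "pint p x" "pint p y" shows "pint p (x + y)"
proof -
  obtain a b where ab: "b \<noteq> 0" "x = of_int a / of_int b" "\<not> int p dvd b"
    using assms(1) unfolding pint_def by blast
  obtain c d where cd: "d \<noteq> 0" "y = of_int c / of_int d" "\<not> int p dvd d"
    using assms(2) unfolding pint_def by blast
  have "x + y = of_int (a*d + c*b) / of_int (b*d)" using ab cd by (simp add: field_simps)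
  moreover have "\<not> int p dvd (b*d)" using pdvd_mult ab cd by blast
  ultimately show ?thesis unfolding pint_def using ab cd by (intro exI[of _ "a*d + c*b"] exI[of _ "b*d"]) simp
qed

lemma P_mult: assumes "pint p x" "pint p y" shows "pint p (x * y)"
proof -
  obtain a b where ab: "b \<noteq> 0" "x = of_int a / of_int b" "\<not> int p dvd b"
    using assms(1) unfolding pint_def by blast
  obtain c d where cd: "d \<noteq> 0" "y = of_int c / of_int d" "\<not> int p dvd d"
    using assms(2) unfolding pint_def by blast
  have "x * y = of_int (a*c) / of_int (b*d)" using ab cd by (simp add: field_simps)
  moreover have "\<not> int p dvd (b*d)" using pdvd_mult ab cd by blast
  ultimately show ?thesis unfolding pint_def using ab cd by (intro exI[of _ "a*c"] exI[of _ "b*d"]) simp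
qed

lemma P_neg: assumes "pint p x" shows "pint p (- x)"
proof -
  obtain a b where ab: "b \<noteq> 0" "x = of_int a / of_int b" "\<not> int p dvd b"
    using assms(1) unfolding pint_def by blast
  have "- x = of_int (-a) / of_int b" using ab by simp
  then show ?thesis unfolding pint_def using ab by (intro exI[of _ "-a"] exI[of _ b]) simp
qed

lemma P_diff: "pint p x \<Longrightarrow> pint p y \<Longrightarrow> pint p (x - y)"
  using P_add[of x "-y"] P_neg[of y] by simp

lemma P_int: "pint p (of_int a)"
proof -
  have "\<not> int p dvd 1" using pp by (simp add: prime_nat_iff)
  then show ?thesis unfolding pint_def by (intro exI[of _ a] exI[of _ 1]) simp
qed

lemma P_nat: "pint p (of_nat a)"
  using P_int[of "int a"] by simp

lemma P_inv: assumes "\<not> p dvd j" shows "pint p (1 / of_nat j)"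
  unfolding pint_def
  by (rule exI[of _ 1], rule exI[of _ "int j"]) (use assms in \<open>cases "j = 0"; auto\<close>)

lemma P_I: "rat_cong_zero p x \<Longrightarrow> pint p x"
  unfolding pint_def rat_cong_zero_def by blast

lemma P_power: "pint p x \<Longrightarrow> pint p (x ^ n)"
  by (induction n) (auto intro: P_mult P_nat[of 1, simplified])

lemma P_sum: "(\<And>i. i \<in> A \<Longrightarrow> pint p (f i)) \<Longrightarrow> pint p (sum f A)"
  by (induction A rule: infinite_finite_induct) (auto intro: P_add P_nat[of 0, simplified])

lemma P_prod: "(\<And>i. i \<in> A \<Longrightarrow> pint p (f i)) \<Longrightarrow> pint p (prod f A)"
  by (induction A rule: infinite_finite_induct) (auto intro: P_mult P_nat[of 1, simplified])

lemma I_sum: "(\<And>i. i \<in> A \<Longrightarrow> rat_cong_zero p (f i)) \<Longrightarrow> rat_cong_zero p (sum f A)"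
  by (induction A rule: infinite_finite_induct) (auto intro: I_add I_zero)

lemma rc_refl: "rcong p x x" unfolding rcong_def using I_zero by simp

lemma rc_sym: "rcong p x y \<Longrightarrow> rcong p y x" unfolding rcong_def
  using I_neg[of "x - y"] by simp

lemma rc_trans: "rcong p x y \<Longrightarrow> rcong p y z \<Longrightarrow> rcong p x z"
  unfolding rcong_def using I_add[of "x - y" "y - z"] by simp

lemma rc_add: "rcong p x x' \<Longrightarrow> rcong p y y' \<Longrightarrow> rcong p (x + y) (x' + y')"
  unfolding rcong_def using I_add[of "x - x'" "y - y'"] by (simp add: algebra_simps)

lemma rc_diff: "rcong p x x' \<Longrightarrow> rcong p y y' \<Longrightarrow> rcong p (x - y) (x' - y')"
  unfolding rcong_def using I_diff[of "x - x'" "y - y'"] by (simp add: algebra_simps)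

lemma rc_mult: assumes "pint p x" "pint p y'" "rcong p x x'" "rcong p y y'"
  shows "rcong p (x * y) (x' * y')"
proof -
  have "x * y - x' * y' = x * (y - y') + y' * (x - x')" by (simp add: algebra_simps)
  then show ?thesis using assms I_add[OF I_mult I_mult] unfolding rcong_def by simp
qed

lemma rc_power: "pint p x \<Longrightarrow> pint p x' \<Longrightarrow> rcong p x x' \<Longrightarrow> rcong p (x ^ n) (x' ^ n)"
  by (induction n) (auto intro: rc_mult rc_refl P_power)

lemma rc_prod: "(\<And>i. i \<in> A \<Longrightarrow> pint p (f i) \<and> pint p (g i) \<and> rcong p (f i) (g i))
   \<Longrightarrow> rcong p (prod f A) (prod g A)"
  by (induction A rule: infinite_finite_induct) (auto intro!: rc_mult rc_refl P_prod)

end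


context fixes p :: nat assumes pp: "prime p" begin

lemma harm_Suc: "harmonic (Suc m) = harmonic m + 1 / of_nat (Suc m)"
  by (simp add: harmonic_def)

lemma harm_P: "j < p \<Longrightarrow> pint p (harmonic j)"
  unfolding harmonic_def
  by (rule P_sum[OF pp], rule P_inv[OF pp]) (auto dest: dvd_imp_le)

lemma harm_tail: "j \<le> p - 1 \<Longrightarrow>
   harmonic (p - 1) - harmonic (p - 1 - j) = (\<Sum>m=1..j. 1 / of_nat (p - m))"
proof (induction j)
  case 0 then show ?case by simp
next
  case (Suc j)
  have e: "p - 1 - j = Suc (p - 1 - Suc j)" "Suc (p - 1 - Suc j) = p - Suc j" using Suc.prems by auto
  have f0: "harmonic (p - 1 - j) = harmonic (p - 1 - Suc j) + 1 / of_nat (Suc (p - 1 - Suc j))"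
    by (subst e(1)) (rule harm_Suc)
  have f: "harmonic (p - 1 - j) = harmonic (p - 1 - Suc j) + 1 / of_nat (p - Suc j)"
    using f0 unfolding e(2) .
  have ih: "harmonic (p - 1) - harmonic (p - 1 - j) = (\<Sum>m=1..j. 1 / of_nat (p - m))"
    using Suc.IH Suc.prems by simp
  have "harmonic (p - 1) - harmonic (p - 1 - Suc j) = (harmonic (p - 1) - harmonic (p - 1 - j)) + 1 / of_nat (p - Suc j)"
    using f by simp
  then show ?case unfolding ih by simp
qed

lemma I_pair: assumes "1 \<le> m" "m < p"
  shows "rat_cong_zero p (1 / of_nat m + 1 / of_nat (p - m))"
proof -
  have d: "of_nat (p - m) = (of_nat p - of_nat m :: rat)" using assms by (simp add: of_nat_diff)
  have nz: "(of_nat m :: rat) \<noteq> 0" "(of_nat p - of_nat m :: rat) \<noteq> 0" using assms by auto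
  have e0: "1 / of_nat m + 1 / of_nat (p - m) = (of_nat p :: rat) / (of_nat m * of_nat (p - m))"
    unfolding d using nz by (simp add: field_simps)
  have e: "1 / of_nat m + 1 / of_nat (p - m) = (of_int (int p) :: rat) / of_int (int (m * (p - m)))"
    unfolding e0 by simp
  have "\<not> p dvd m" "\<not> p dvd (p - m)" using assms by (auto dest: dvd_imp_le)
  hence "\<not> p dvd (m * (p - m))" using pp prime_dvd_mult_iff by blast
  hence "\<not> int p dvd int (m * (p - m))" using int_dvd_int_iff by blast
  moreover have "int (m * (p - m)) \<noteq> 0" using assms by simp
  ultimately show ?thesis unfolding rat_cong_zero_def e by (intro exI[of _ "int p"] exI[of _ "int (m * (p - m))"]) simp
qed

lemma harm_full: assumes "odd p" shows "rat_cong_zero p (harmonic (p - 1))"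
proof -
  have "harmonic (p - 1) = (\<Sum>i=1..p-1. 1 / of_nat (p - 1 + 1 - i))"
    unfolding harmonic_def by (rule sum.atLeastAtMost_rev)
  also have "\<dots> = (\<Sum>i=1..p-1. 1 / of_nat (p - i))"
    using pp prime_gt_0_nat by (intro sum.cong) auto
  finally have "2 * harmonic (p - 1) = (\<Sum>i=1..p-1. 1 / of_nat i + 1 / of_nat (p - i))"
    by (simp add: sum.distrib harmonic_def)
  moreover have "rat_cong_zero p (\<Sum>i=1..p-1. 1 / of_nat i + 1 / of_nat (p - i))"
    by (rule I_sum[OF pp], rule I_pair) auto
  ultimately show ?thesis using I_half[OF pp assms] by simp
qed

lemma harm_refl: assumes "odd p" "j \<le> p - 1"
  shows "rcong p (harmonic (p - 1 - j)) (harmonic j)"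
proof -
  have "harmonic (p - 1 - j) - harmonic j
      = harmonic (p - 1) - (\<Sum>m=1..j. 1 / of_nat m + 1 / of_nat (p - m))"
    using harm_tail[OF assms(2)] by (simp add: sum.distrib harmonic_def)
  moreover have "rat_cong_zero p (\<Sum>m=1..j. 1 / of_nat m + 1 / of_nat (p - m))"
    by (rule I_sum[OF pp], rule I_pair) (use assms in auto)
  ultimately show ?thesis unfolding rcong_def using I_diff[OF pp] harm_full[OF assms(1)] by simp
qed

end


definition cc :: "nat \<Rightarrow> nat \<Rightarrow> rat" where
  "cc q k = pochhammer (of_nat q) k / pochhammer 1 k"

definition PP :: "nat \<Rightarrow> nat \<Rightarrow> rat" where
  "PP q k = pochhammer (of_nat k + 1) (q - 1)"

lemma cc_eq: assumes "q \<ge> 1" shows "cc q k = PP q k / fact (q - 1)"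
proof -
  have h1: "pochhammer (1::rat) ((q-1)+k) = pochhammer 1 (q-1) * pochhammer (1 + of_nat (q-1)) k"
    by (rule pochhammer_product')
  have q1: "1 + of_nat (q-1) = (of_nat q :: rat)" using assms by (simp add: of_nat_diff)
  have h2: "pochhammer (1::rat) (k+(q-1)) = pochhammer 1 k * pochhammer (1 + of_nat k) (q-1)"
    by (rule pochhammer_product')
  have "fact (q-1) * pochhammer (of_nat q :: rat) k = fact k * pochhammer (of_nat k + 1) (q-1)"
    using h1 h2 unfolding q1 pochhammer_fact[symmetric] by (simp add: add.commute)
  then show ?thesis unfolding cc_def PP_def pochhammer_fact[symmetric]
    by (simp add: field_simps)
qed

lemma PP_prod: "PP q k = (\<Prod>i<q-1. of_nat k + 1 + of_nat i)"
  unfolding PP_def pochhammer_prod atLeast0LessThan ..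

context fixes p :: nat assumes pp: "prime p" begin

lemma I_p: "rat_cong_zero p (of_nat p)"
  unfolding rat_cong_zero_def by (intro exI[of _ "int p"] exI[of _ 1]) (use pp in \<open>simp add: prime_nat_iff\<close>)

lemma PP_pint: "pint p (PP q k)"
  unfolding PP_prod by (rule P_prod[OF pp]) (use P_nat[OF pp, of "k + 1 + _"] in \<open>simp add: ac_simps\<close>)

lemma PP_refl: assumes "k \<le> p - q" "q \<ge> 1" "q \<le> p"
  shows "rcong p (PP q (p - q - k)) ((-1) ^ (q - 1) * PP q k)"
proof -
  have "PP q (p - q - k) = (\<Prod>i<q-1. of_nat (p - q - k) + 1 + of_nat (q - 1 - Suc i))"
    unfolding PP_prod by (rule prod.nat_diff_reindex[symmetric])
  also have "\<dots> = (\<Prod>i<q-1. of_nat p - (of_nat k + 1 + of_nat i))"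
  proof (rule prod.cong)
    fix i assume "i \<in> {..<q-1}"
    hence i: "i < q - 1" by simp
    have "p - q - k + 1 + (q - 1 - Suc i) = p - (k + 1 + i)" using i assms by simp
    moreover have "k + 1 + i \<le> p" using i assms by simp
    ultimately have "(of_nat (p - q - k + 1 + (q - 1 - Suc i)) :: rat) = of_nat p - (of_nat k + 1 + of_nat i)"
      by (simp add: of_nat_diff)
    then show "of_nat (p - q - k) + 1 + of_nat (q - 1 - Suc i) = (of_nat p - (of_nat k + 1 + of_nat i) :: rat)"
      by simp
  qed simp
  finally have e: "PP q (p - q - k) = (\<Prod>i<q-1. of_nat p - (of_nat k + 1 + of_nat i))" .
  have r: "rcong p (\<Prod>i<q-1. of_nat p - (of_nat k + 1 + of_nat i)) (\<Prod>i<q-1. - (of_nat k + 1 + of_nat i))"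
  proof (rule rc_prod[OF pp])
    fix i
    have a: "pint p (of_nat k + 1 + of_nat i)" using P_nat[OF pp, of "k + 1 + i"] by (simp add: ac_simps)
    have "pint p (of_nat p - (of_nat k + 1 + of_nat i))" by (rule P_diff[OF pp P_nat[OF pp] a])
    moreover have "pint p (- (of_nat k + 1 + of_nat i))" by (rule P_neg[OF pp a])
    moreover have "rcong p (of_nat p - (of_nat k + 1 + of_nat i)) (- (of_nat k + 1 + of_nat i))"
      unfolding rcong_def using I_p by simp
    ultimately show "pint p (of_nat p - (of_nat k + 1 + of_nat i :: rat)) \<and> pint p (- (of_nat k + 1 + of_nat i)) \<and>
        rcong p (of_nat p - (of_nat k + 1 + of_nat i)) (- (of_nat k + 1 + of_nat i))" by blast
  qed
  have "(\<Prod>i<q-1. - (of_nat k + 1 + of_nat i :: rat)) = (-1) ^ (q - 1) * PP q k"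
    unfolding PP_prod prod_uminus by simp
  then show ?thesis using r e by simp
qed

lemma Finv_pint: assumes "q \<le> p" shows "pint p (1 / fact (q - 1))"
proof -
  have "0 < p" using pp prime_gt_0_nat by blast
  hence "q - 1 < p" using assms by linarith
  hence "\<not> p dvd fact (q - 1)" using prime_dvd_fact_iff[OF pp] by simp
  then show ?thesis using P_inv[OF pp, of "fact (q - 1)"] by (simp add: of_nat_fact)
qed

lemma cc_pint: assumes "q \<ge> 1" "q \<le> p" shows "pint p (cc q k)"
  unfolding cc_eq[OF assms(1)] using P_mult[OF pp PP_pint Finv_pint[OF assms(2)]] by simp

lemma cc_refl: assumes "k \<le> p - q" "q \<ge> 1" "q \<le> p" "even ((q - 1) * n)"
  shows "rcong p (cc q (p - q - k) ^ n) (cc q k ^ n)"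
proof -
  have a: "rcong p (PP q (p - q - k) * (1 / fact (q - 1))) ((-1) ^ (q - 1) * PP q k * (1 / fact (q - 1)))"
    by (rule rc_mult[OF pp PP_pint Finv_pint[OF assms(3)] PP_refl[OF assms(1-3)] rc_refl[OF pp]])
  have b: "pint p ((-1) ^ (q - 1) * PP q k * (1 / fact (q - 1)))"
    by (intro P_mult[OF pp] PP_pint Finv_pint[OF assms(3)] P_power[OF pp] P_neg[OF pp])
      (use P_nat[OF pp, of 1] in simp)
  have c: "rcong p ((PP q (p - q - k) * (1 / fact (q - 1))) ^ n) (((-1) ^ (q - 1) * PP q k * (1 / fact (q - 1))) ^ n)"
    by (rule rc_power[OF pp P_mult[OF pp PP_pint Finv_pint[OF assms(3)]] b a])
  obtain r where r: "(q - 1) * n = 2 * r" using assms(4) by blast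
  have "((-1) ^ (q - 1) * PP q k * (1 / fact (q - 1))) ^ n = ((-1::rat) ^ ((q - 1) * n)) * (PP q k / fact (q - 1)) ^ n"
  proof -
    have "(-1) ^ (q - 1) * PP q k * (1 / fact (q - 1)) = (-1::rat) ^ (q - 1) * (PP q k / fact (q - 1))"
      by simp
    then show ?thesis by (simp only: power_mult_distrib power_mult)
  qed
  also have "\<dots> = cc q k ^ n" unfolding r cc_eq[OF assms(2)] by (simp add: power_mult)
  finally show ?thesis using c unfolding cc_eq[OF assms(2)] by simp
qed

lemma main_gen:
  fixes G :: "rat \<Rightarrow> rat \<Rightarrow> rat"
  assumes Gc: "\<And>x y x' y'. pint p x \<Longrightarrow> pint p y \<Longrightarrow> pint p x' \<Longrightarrow> pint p y' \<Longrightarrow>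
                 rcong p x x' \<Longrightarrow> rcong p y y' \<Longrightarrow> rcong p (G x y) (G x' y')"
    and Ga: "\<And>x y. G y x = - G x y"
    and Gp: "\<And>x y. pint p x \<Longrightarrow> pint p y \<Longrightarrow> pint p (G x y)"
    and q: "q \<ge> 1" "q \<le> p" and po: "odd p" and ev: "even ((q - 1) * n)"
  shows "rat_cong_zero p (\<Sum>k=0..p-q. cc q k ^ n * G (harmonic k) (harmonic (q + k - 1)))"
proof -
  define T where "T k = cc q k ^ n * G (harmonic k) (harmonic (q + k - 1))" for k
  have rev: "sum T {0..p-q} = sum (\<lambda>k. T (p - q - k)) {0..p-q}"
    using sum.atLeastAtMost_rev[of T 0 "p - q"] by simp
  have each: "rat_cong_zero p (T k + T (p - q - k))" if k: "k \<in> {0..p-q}" for k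
  proof -
    have k': "k \<le> p - q" using k by simp
    have e1: "p - 1 - (q + k - 1) = p - q - k" using k' q by simp
    have e2: "q + (p - q - k) - 1 = p - 1 - k" using k' q by simp
    have h1: "rcong p (harmonic (p - q - k)) (harmonic (q + k - 1))"
      using harm_refl[OF pp po, of "q + k - 1"] k' q unfolding e1 by simp
    have h2: "rcong p (harmonic (q + (p - q - k) - 1)) (harmonic k)"
      using harm_refl[OF pp po, of k] k' q unfolding e2 by simp
    have lt: "p - q - k < p" "q + (p - q - k) - 1 < p" "q + k - 1 < p" "k < p"
      using k' q pp prime_gt_0_nat by auto
    have g: "rcong p (G (harmonic (p - q - k)) (harmonic (q + (p - q - k) - 1)))
                     (G (harmonic (q + k - 1)) (harmonic k))"
      by (rule Gc[OF harm_P[OF pp lt(1)] harm_P[OF pp lt(2)] harm_P[OF pp lt(3)] harm_P[OF pp lt(4)] h1 h2])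
    have m: "rcong p (T (p - q - k)) (cc q k ^ n * G (harmonic (q + k - 1)) (harmonic k))"
      unfolding T_def
      by (rule rc_mult[OF pp P_power[OF pp cc_pint[OF q]] Gp[OF harm_P[OF pp lt(3)] harm_P[OF pp lt(4)]]
            cc_refl[OF k' q ev] g])
    have "cc q k ^ n * G (harmonic (q + k - 1)) (harmonic k) = - T k"
      unfolding T_def by (subst Ga) simp
    then show ?thesis using m unfolding rcong_def by (simp add: add.commute)
  qed
  have "2 * sum T {0..p-q} = (\<Sum>k=0..p-q. T k + T (p - q - k))"
    by (subst sum.distrib, subst rev[symmetric]) simp
  moreover have "rat_cong_zero p (\<Sum>k=0..p-q. T k + T (p - q - k))"
    by (rule I_sum[OF pp each])
  ultimately have "rat_cong_zero p (sum T {0..p-q})" using I_half[OF pp po] by simp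
  then show ?thesis unfolding T_def .
qed

end

theorem lemma3p1:
  fixes n q p :: nat
  assumes "n > 2" and "q > 0" and "even n \<or> odd q"
    and "prime p" and "p > max n ((q - 1) * n + 1)"
  shows "rat_cong_zero p
           (\<Sum>k=0..p-q. (pochhammer (of_nat q) k ^ n / pochhammer 1 k ^ n)
                         * (harmonic k - harmonic (q + k - 1)))
       \<and> rat_cong_zero p
           (\<Sum>k=0..p-q. (pochhammer (of_nat q) k ^ n / pochhammer 1 k ^ n)
                         * (harmonic k ^ 2 - harmonic (q + k - 1) ^ 2))"
proof -
  note pp = assms(4)
  have po: "odd p" using prime_odd_nat[OF pp] assms(1,5) by simp
  have h: "q - 1 \<le> (q - 1) * n" using assms(1) by simp
  have h2: "(q - 1) * n + 1 < p" using assms(5) by simp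
  have q: "q \<ge> 1" "q \<le> p" using assms(2) h h2 by arith+
  have ev: "even ((q - 1) * n)" using assms(2,3) by auto
  have eq: "pochhammer (of_nat q) k ^ n / pochhammer 1 k ^ n = cc q k ^ n" for k :: nat
    by (simp add: cc_def power_divide)
  have s1: "rat_cong_zero p (\<Sum>k=0..p-q. cc q k ^ n * ((\<lambda>x y. x - y) (harmonic k) (harmonic (q + k - 1))))"
  proof (rule main_gen[OF pp _ _ _ q po ev])
    show "\<And>x y x' y'. pint p x \<Longrightarrow> pint p y \<Longrightarrow> pint p x' \<Longrightarrow> pint p y' \<Longrightarrow>
      rcong p x x' \<Longrightarrow> rcong p y y' \<Longrightarrow> rcong p (x - y) (x' - y')"
      by (rule rc_diff[OF pp])
    show "\<And>x y. pint p x \<Longrightarrow> pint p y \<Longrightarrow> pint p (x - y)" by (rule P_diff[OF pp])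
  qed simp
  have s2: "rat_cong_zero p (\<Sum>k=0..p-q. cc q k ^ n * ((\<lambda>x y. x ^ 2 - y ^ 2) (harmonic k) (harmonic (q + k - 1))))"
  proof (rule main_gen[OF pp _ _ _ q po ev])
    show "\<And>x y x' y'. pint p x \<Longrightarrow> pint p y \<Longrightarrow> pint p x' \<Longrightarrow> pint p y' \<Longrightarrow>
      rcong p x x' \<Longrightarrow> rcong p y y' \<Longrightarrow> rcong p (x ^ 2 - y ^ 2) (x' ^ 2 - y' ^ 2)"
      by (rule rc_diff[OF pp]; rule rc_power[OF pp])
    show "\<And>x y. pint p x \<Longrightarrow> pint p y \<Longrightarrow> pint p (x ^ 2 - y ^ 2)"
      by (rule P_diff[OF pp]; rule P_power[OF pp])
  qed simp
  show ?thesis unfolding eq using s1 s2 by simp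
qed

end
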